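(* Let $m\ge0$ be an integer, $s\in(0,1]$, $x,y\in\mathbb{R}$. For $N\ge1$ let $n_1=Ns$, $z_1=-2Ns-x\sqrt{2N}$, $z_2=-\sqrt{2N}\,y$ (rounded to integers). Then $\sqrt{2N}\,S^*_{m,-n_1}(z_1,z_2)\sim (N/2)^{m/2}S_{-m,-s}(x,y)$ as $N\to\infty$, i.e. $\sqrt{2N}(N/2)^{-m/2}S^*_{m,-n_1}(z_1,z_2)\to S_{-m,-s}(x,y)$.
   Context: With $\phi(w)=\frac{w}{2w-1}$ (i.e. $\phi(w)=(1-q)w/(w-q)$ with $q=1/2$) and $r\in(1/2,1)$, for integers $n$: $S^*_{m,-n}(z_1,z_2)=\frac{1}{2\pi\mathbf{i}}\oint_{|w|=r}\frac{2^{-(z_1-z_2)}}{w^{z_1-z_2+n+1}}(1-w)^n\phi(w)^m\,dw$. For $t<0$ and $k\in\mathbb{Z}$, $S_{k,t}(x,y)=\frac{1}{2\pi\mathbf{i}}\oint_\Gamma e^{\frac t2 z^2+(x-y)z}z^k\,dz$, where for some $0<\theta<\pi/4$, $d>0$, $\Gamma=\{d+e^{\mathbf{i}\theta}u:u\in(-\infty,0]\}\cup\{d-e^{-\mathbf{i}\theta}u:u\in[0,\infty)\}$ (traversed in the order of $u$). *)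

theory Defs
  imports "HOL-Complex_Analysis.Complex_Analysis"
begin

text \<open>phi(w) = w/(2w-1), i.e. (1-q)w/(w-q) with q = 1/2.\<close>
definition phi :: "complex \<Rightarrow> complex" where
  "phi w = w / (2 * w - 1)"

definition Sstar :: "real \<Rightarrow> nat \<Rightarrow> int \<Rightarrow> int \<Rightarrow> int \<Rightarrow> complex" where
  "Sstar r m k z1 z2 =
     contour_integral (circlepath 0 r)
       (\<lambda>w. (2::complex) powi (-(z1 - z2)) / w powi (z1 - z2 + (-k) + 1)
              * (1 - w) powi (-k) * phi w ^ m) / (2 * of_real pi * \<i>)"

definition Skernel :: "int \<Rightarrow> real \<Rightarrow> real \<Rightarrow> real \<Rightarrow> complex \<Rightarrow> complex" where
  "Skernel k t x y z = exp (of_real t / 2 * z ^ 2 + of_real (x - y) * z) * z powi k"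

text \<open>S_{k,t}(x,y) for t < 0: integral over the contour
  Gamma = {d + e^{i theta} u : u \<in> (-inf,0]} \<union> {d - e^{-i theta} u : u \<in> [0,inf)},
  traversed in the order of u, written via the parametrisations of the two rays.\<close>
definition Scont :: "real \<Rightarrow> real \<Rightarrow> int \<Rightarrow> real \<Rightarrow> real \<Rightarrow> real \<Rightarrow> complex" where
  "Scont \<theta> d k t x y =
     (integral {..0::real} (\<lambda>u. Skernel k t x y (of_real d + cis \<theta> * of_real u) * cis \<theta>)
      + integral {0::real..} (\<lambda>u. Skernel k t x y (of_real d - cis (-\<theta>) * of_real u) * (- cis (-\<theta>))))
     / (2 * of_real pi * \<i>)"

end

theory Submission
  imports Defs "HOL-Real_Asymp.Real_Asymp"
begin

lemma fps_one_minus_X_pow_nth: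
  "((1 - fps_X :: complex fps) ^ n) $ k = (-1)^k * of_nat (n choose k)"
proof -
  have "(1 - fps_X :: complex fps) = (1 + fps_X) oo (- fps_X)"
    by (simp add: fps_compose_add_distrib)
  hence "(1 - fps_X :: complex fps) ^ n = ((1 + fps_X) ^ n) oo (- fps_X)"
    by (simp add: fps_compose_power)
  also have "(1 + fps_X :: complex fps) ^ n = fps_binomial (of_nat n)"
    by (simp add: fps_binomial_of_nat)
  finally show ?thesis by (simp add: fps_compose_uminus' binomial_gbinomial)
qed

lemma fps_one_minus_X2_pow_nth:
  "((1 - fps_X^2 :: complex fps) ^ n) $ k =
     (if even k then (-1)^(k div 2) * of_nat (n choose (k div 2)) else 0)"
proof -
  have "(1 - fps_X^2 :: complex fps) = (1 - fps_X) oo (fps_X^2)"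
    by (simp add: fps_compose_sub_distrib)
  hence "(1 - fps_X^2 :: complex fps) ^ n = ((1 - fps_X) ^ n) oo (fps_X^2)"
    by (simp add: fps_compose_power)
  thus ?thesis by (simp add: fps_nth_compose_X_power fps_one_minus_X_pow_nth)
qed

lemma fps_key_identity:
  fixes P n :: nat and q :: int
  assumes "int P = int n + q"
  shows "((1 + fps_X :: complex fps) ^ P * (1 - fps_X) ^ n) = (1 - fps_X^2) ^ n * fps_binomial (of_int q)"
proof -
  have "(1 + fps_X :: complex fps) ^ P = fps_binomial (of_nat P)"
    by (simp add: fps_binomial_of_nat)
  also have "(of_nat P :: complex) = of_nat n + of_int q"
    using assms by (metis of_int_add of_int_of_nat_eq)
  also have "fps_binomial (of_nat n + of_int q) = (1 + fps_X) ^ n * fps_binomial (of_int q :: complex)"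
    by (simp add: fps_binomial_add_mult fps_binomial_of_nat)
  finally have "(1 + fps_X :: complex fps) ^ P * (1 - fps_X) ^ n =
       ((1 + fps_X) * (1 - fps_X)) ^ n * fps_binomial (of_int q)"
    by (simp add: power_mult_distrib mult_ac)
  also have "(1 + fps_X :: complex fps) * (1 - fps_X) = 1 - fps_X^2"
    by (simp add: algebra_simps power2_eq_square)
  finally show ?thesis .
qed

definition coefA :: "nat \<Rightarrow> int \<Rightarrow> nat \<Rightarrow> complex" where
  "coefA n q j = (\<Sum>k=0..j. (if even k then (-1)^(k div 2) * of_nat (n choose (k div 2)) else 0)
                      * (of_int q gchoose (j - k)))"

lemma fps_key_nth:
  fixes P n :: nat and q :: int
  assumes "int P = int n + q"
  shows "((1 + fps_X :: complex fps) ^ P * (1 - fps_X) ^ n) $ j = coefA n q j"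
  unfolding fps_key_identity[OF assms] coefA_def fps_mult_nth fps_one_minus_X2_pow_nth
  by simp

lemma integrand_eq:
  fixes Z :: int and n E m :: nat and w :: complex
  assumes ZE: "Z + int n + 1 = - int E"
  shows "(2::complex) powi (-Z) / w powi (Z + int n + 1) * (1 - w) powi (int n) * phi w ^ m
       = (2 powi (1 - 2 * int m) * (1 + (2*w + -1))^(E+m) * (1 - (2*w + -1))^n) / (w - 1/2)^m"
proof -
  have e1: "w powi (Z + int n + 1) = inverse (w ^ E)"
    using ZE by (simp add: power_int_minus)
  have e2: "(1 - w) powi (int n) = (1-w)^n" by simp
  have e3: "phi w ^ m = w^m / (2^m * (w - 1/2)^m)"
    by (simp add: phi_def power_divide flip: power_mult_distrib)
  have e4: "(1 + (2*w + -1)) = 2 * w" "1 - (2*w + -1) = 2 * (1 - w)" by simp_all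
  have e5: "(2::complex) powi (-Z) = 2 powi (1 - 2 * int m) * 2^(E+m) * 2^n * 2^m"
  proof -
    have pa: "\<And>a b. (2::complex) powi (a+b) = 2 powi a * 2 powi b" by (simp add: power_int_add)
    have "-Z = (1 - 2 * int m) + int (E+m) + int n + int m" using ZE by simp
    hence "(2::complex) powi (-Z) = 2 powi ((1 - 2 * int m) + int (E+m) + int n + int m)" by simp
    also have "\<dots> = 2 powi (1 - 2 * int m) * 2 powi int (E+m) * 2 powi (int n) * 2 powi (int m)"
      using pa by metis
    finally show ?thesis by (simp only: power_int_of_nat)
  qed
  show ?thesis
    unfolding e1 e2 e3 e4 e5 power_mult_distrib
    by (simp add: power_add field_simps)
qed

lemma Sstar_eval:
  fixes z1 z2 :: int and n E m :: nat
  assumes r: "1/2 < r" and ZE: "z1 - z2 + int n + 1 = - int E"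
  shows "Sstar r m (- int n) z1 z2 =
           (if m = 0 then 0 else 2 powi (- int m) * coefA n (int (E+m) - int n) (m - 1))"
proof -
  define g where "g u = (2::complex) powi (1 - 2 * int m) * (1 + u)^(E+m) * (1 - u)^n" for u
  have eq: "(\<lambda>w. (2::complex) powi (-(z1 - z2)) / w powi (z1 - z2 + (- (- int n)) + 1)
              * (1 - w) powi (- (- int n)) * phi w ^ m) = (\<lambda>w. g (2*w + -1) / (w - 1/2)^m)"
    using integrand_eq[OF ZE] unfolding g_def by (intro ext) simp
  have Sd: "Sstar r m (- int n) z1 z2 = contour_integral (circlepath 0 r) (\<lambda>w. g (2*w + -1) / (w - 1/2)^m) / (2 * of_real pi * \<i>)"
    unfolding Sstar_def eq ..
  have hol: "(\<lambda>w. g (2*w + -1)) holomorphic_on A" for A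
    unfolding g_def by (intro holomorphic_intros)
  have r0: "0 < r" using r by simp
  show ?thesis
  proof (cases m)
    case 0
    have "((\<lambda>w. g (2*w + -1)) has_contour_integral 0) (circlepath 0 r)"
      by (rule Cauchy_theorem_disc_simple[of _ 0 "r+1"]) (use hol r0 in auto)
    thus ?thesis unfolding Sd using 0 by (simp add: contour_integral_unique)
  next
    case (Suc j)
    have "((\<lambda>w. g (2*w + -1) / (w - 1/2) ^ Suc j) has_contour_integral
           ((2 * pi * \<i>) / fact j * (deriv ^^ j) (\<lambda>w. g (2*w + -1)) (1/2))) (circlepath 0 r)"
      by (rule Cauchy_has_contour_integral_higher_derivative_circlepath)
         (use hol r in \<open>auto intro: holomorphic_on_imp_continuous_on\<close>)
    hence ci: "contour_integral (circlepath 0 r) (\<lambda>w. g (2*w + -1) / (w - 1/2)^m)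
          = (2 * pi * \<i>) / fact j * (deriv ^^ j) (\<lambda>w. g (2*w + -1)) (1/2)"
      using Suc by (simp add: contour_integral_unique)
    have d1: "(deriv ^^ j) (\<lambda>w. g (2*w + -1)) (1/2) = 2^j * (deriv ^^ j) g 0"
    proof -
      have holg: "g holomorphic_on UNIV" unfolding g_def by (intro holomorphic_intros)
      show ?thesis using higher_deriv_compose_linear'[OF holg, of UNIV "1/2" 2 "-1" j] by simp
    qed
    define G where "G = fps_const ((2::complex) powi (1 - 2 * int m)) * (1 + fps_X)^(E+m) * (1 - fps_X)^n"
    have "g has_fps_expansion G"
      unfolding g_def[abs_def] G_def by (intro fps_expansion_intros)
    hence d2: "(deriv ^^ j) g 0 = fact j * G $ j"
      by (simp add: fps_nth_fps_expansion)
    have d3: "G $ j = 2 powi (1 - 2 * int m) * coefA n (int (E+m) - int n) j"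
      unfolding G_def mult.assoc fps_mult_left_const_nth
      by (subst fps_key_nth) auto
    have "Sstar r m (- int n) z1 z2 = 2^j * 2 powi (1 - 2 * int m) * coefA n (int (E+m) - int n) j"
      unfolding Sd ci d1 d2 d3 by (simp add: field_simps)
    also have "(2::complex)^j * 2 powi (1 - 2 * int m) = 2 powi (- int m)"
    proof -
      have "(2::complex)^j * 2 powi (1 - 2 * int m) = 2 powi (int j + (1 - 2 * int m))"
        by (simp add: power_int_add)
      also have "int j + (1 - 2 * int m) = - int m" using Suc by simp
      finally show ?thesis .
    qed
    finally show ?thesis using Suc by simp
  qed
qed

definition tN :: "nat \<Rightarrow> real" where "tN N = sqrt (2 * real N)"
definition nN :: "real \<Rightarrow> nat \<Rightarrow> nat" where "nN s N = nat \<lfloor>real N * s\<rfloor>"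
definition ZN :: "real \<Rightarrow> real \<Rightarrow> real \<Rightarrow> nat \<Rightarrow> int" where
  "ZN s x y N = \<lfloor>- 2 * real N * s - x * tN N\<rfloor> - \<lfloor>- tN N * y\<rfloor>"
definition qN :: "nat \<Rightarrow> real \<Rightarrow> real \<Rightarrow> real \<Rightarrow> nat \<Rightarrow> int" where
  "qN m s x y N = - ZN s x y N - 2 * int (nN s N) - 1 + int m"

lemma nN_bounds:
  assumes "0 < s"
  shows "real (nN s N) \<le> real N * s" "real N * s - 1 < real (nN s N)"
proof -
  have "0 \<le> \<lfloor>real N * s\<rfloor>" using assms by simp
  hence e: "real (nN s N) = real_of_int \<lfloor>real N * s\<rfloor>" unfolding nN_def by simp
  show "real (nN s N) \<le> real N * s" unfolding e by linarith
  show "real N * s - 1 < real (nN s N)" unfolding e by linarith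
qed

lemma qN_bound:
  assumes "0 < s"
  shows "\<bar>real_of_int (qN m s x y N) - (x - y) * tN N\<bar> \<le> 4 + real m"
proof -
  have n1: "real (nN s N) \<le> real N * s" "real N * s - 1 < real (nN s N)"
    using nN_bounds[OF assms] by auto
  have f1: "real_of_int \<lfloor>- 2 * real N * s - x * tN N\<rfloor> \<le> - 2 * real N * s - x * tN N"
           "- 2 * real N * s - x * tN N - 1 < real_of_int \<lfloor>- 2 * real N * s - x * tN N\<rfloor>"
    by linarith+
  have f2: "real_of_int \<lfloor>- tN N * y\<rfloor> \<le> - tN N * y"
           "- tN N * y - 1 < real_of_int \<lfloor>- tN N * y\<rfloor>"
    by linarith+
  show ?thesis unfolding qN_def ZN_def using n1 f1 f2
    by (simp add: abs_le_iff algebra_simps) linarith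
qed

lemma E_eventually:
  assumes "0 < s"
  shows "eventually (\<lambda>N. ZN s x y N + int (nN s N) + 1 \<le> 0) sequentially"
proof -
  have ev: "eventually (\<lambda>N::nat. - real N * s - (x - y) * sqrt (2 * real N) + 2 \<le> 0) sequentially"
    using assms by real_asymp
  show ?thesis
  proof (rule eventually_mono[OF ev])
    fix N assume h: "- real N * s - (x - y) * sqrt (2 * real N) + 2 \<le> 0"
    have n1: "real (nN s N) \<le> real N * s"
      using nN_bounds[OF assms] by auto
    have f1: "real_of_int \<lfloor>- 2 * real N * s - x * tN N\<rfloor> \<le> - 2 * real N * s - x * tN N"
      by linarith
    have f2: "- tN N * y - 1 < real_of_int \<lfloor>- tN N * y\<rfloor>"
      by linarith
    have "real_of_int (ZN s x y N + int (nN s N) + 1) \<le> 0"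
      unfolding ZN_def using h n1 f1 f2 by (simp add: tN_def algebra_simps)
    thus "ZN s x y N + int (nN s N) + 1 \<le> 0" by simp
  qed
qed

lemma lim_n_ratio:
  assumes "0 < s"
  shows "((\<lambda>N. (real (nN s N) - real i) / (2 * real N)) \<longlongrightarrow> s / 2) sequentially"
proof (rule LIM_zero_cancel, rule Lim_null_comparison)
  show "((\<lambda>N::nat. (1 + real i) / (2 * real N)) \<longlongrightarrow> 0) sequentially" by real_asymp
  show "\<forall>\<^sub>F N in sequentially. norm ((real (nN s N) - real i) / (2 * real N) - s / 2) \<le> (1 + real i) / (2 * real N)"
    using eventually_gt_at_top[of 0]
  proof (rule eventually_mono)
    fix N :: nat assume N: "0 < N"
    have n1: "real (nN s N) \<le> real N * s" "real N * s - 1 < real (nN s N)"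
      using nN_bounds[OF assms] by auto
    have "(real (nN s N) - real i) / (2 * real N) - s / 2 = (real (nN s N) - real N * s - real i) / (2 * real N)"
      using N by (simp add: field_simps)
    also have "norm \<dots> = \<bar>real (nN s N) - real N * s - real i\<bar> / (2 * real N)"
      using N by simp
    also have "\<dots> \<le> (1 + real i) / (2 * real N)"
      using N n1 by (intro divide_right_mono) auto
    finally show "norm ((real (nN s N) - real i) / (2 * real N) - s / 2) \<le> (1 + real i) / (2 * real N)" .
  qed
qed

lemma lim_q_ratio:
  assumes "0 < s"
  shows "((\<lambda>N. (real_of_int (qN m s x y N) - real i) / tN N) \<longlongrightarrow> x - y) sequentially"
proof (rule LIM_zero_cancel, rule Lim_null_comparison)
  show "((\<lambda>N::nat. (4 + real m + real i) / tN N) \<longlongrightarrow> 0) sequentially" unfolding tN_def by real_asymp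
  show "\<forall>\<^sub>F N in sequentially. norm ((real_of_int (qN m s x y N) - real i) / tN N - (x - y)) \<le> (4 + real m + real i) / tN N"
    using eventually_gt_at_top[of 0]
  proof (rule eventually_mono)
    fix N :: nat assume N: "0 < N"
    have t: "0 < tN N" using N by (simp add: tN_def)
    have b: "\<bar>real_of_int (qN m s x y N) - (x - y) * tN N\<bar> \<le> 4 + real m"
      using qN_bound[OF assms] .
    have "(real_of_int (qN m s x y N) - real i) / tN N - (x - y) = (real_of_int (qN m s x y N) - (x - y) * tN N - real i) / tN N"
      using t by (simp add: field_simps)
    also have "norm \<dots> = \<bar>real_of_int (qN m s x y N) - (x - y) * tN N - real i\<bar> / tN N"
      using t by simp
    also have "\<dots> \<le> (4 + real m + real i) / tN N"
      using t b by (intro divide_right_mono) auto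
    finally show "norm ((real_of_int (qN m s x y N) - real i) / tN N - (x - y)) \<le> (4 + real m + real i) / tN N" .
  qed
qed

lemma lim_choose:
  assumes "0 < s"
  shows "((\<lambda>N. real (nN s N choose a) / (2 * real N)^a) \<longlongrightarrow> (s/2)^a / fact a) sequentially"
proof -
  have ev: "eventually (\<lambda>N. (\<Prod>i=0..<a. (real (nN s N) - real i) / (2 * real N)) / fact a
              = real (nN s N choose a) / (2 * real N)^a) sequentially"
    using eventually_gt_at_top[of 0]
  proof (rule eventually_mono)
    fix N :: nat assume N: "0 < N"
    have "real (nN s N choose a) = (\<Prod>i=0..<a. real (nN s N) - real i) / fact a"
      by (simp add: binomial_gbinomial gbinomial_prod_rev)
    thus "(\<Prod>i=0..<a. (real (nN s N) - real i) / (2 * real N)) / fact a = real (nN s N choose a) / (2 * real N)^a"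
      by (simp add: prod_dividef)
  qed
  have "((\<lambda>N. (\<Prod>i=0..<a. (real (nN s N) - real i) / (2 * real N)) / fact a) \<longlongrightarrow> (\<Prod>i=0..<a. s/2) / fact a) sequentially"
    by (rule tendsto_divide[OF tendsto_prod tendsto_const]) (use lim_n_ratio[OF assms] in auto)
  hence "((\<lambda>N. (\<Prod>i=0..<a. (real (nN s N) - real i) / (2 * real N)) / fact a) \<longlongrightarrow> (s/2)^a / fact a) sequentially"
    by simp
  thus ?thesis using ev by (rule Lim_transform_eventually)
qed

lemma lim_gchoose:
  assumes "0 < s"
  shows "((\<lambda>N. (real_of_int (qN m s x y N) gchoose l) / tN N ^ l) \<longlongrightarrow> (x - y)^l / fact l) sequentially"
proof -
  have ev: "eventually (\<lambda>N. (\<Prod>i=0..<l. (real_of_int (qN m s x y N) - real i) / tN N) / fact l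
              = (real_of_int (qN m s x y N) gchoose l) / tN N ^ l) sequentially"
    by (intro always_eventually allI) (simp add: gbinomial_prod_rev prod_dividef)
  have "((\<lambda>N. (\<Prod>i=0..<l. (real_of_int (qN m s x y N) - real i) / tN N) / fact l) \<longlongrightarrow> (\<Prod>i=0..<l. x - y) / fact l) sequentially"
    by (rule tendsto_divide[OF tendsto_prod tendsto_const]) (use lim_q_ratio[OF assms] in auto)
  hence "((\<lambda>N. (\<Prod>i=0..<l. (real_of_int (qN m s x y N) - real i) / tN N) / fact l) \<longlongrightarrow> (x - y)^l / fact l) sequentially"
    by simp
  thus ?thesis using ev by (rule Lim_transform_eventually)
qed

definition aR :: "real \<Rightarrow> nat \<Rightarrow> nat \<Rightarrow> real" where
  "aR s k N = (if even k then (-1)^(k div 2) * real (nN s N choose (k div 2)) else 0) / tN N ^ k"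

definition aL :: "real \<Rightarrow> nat \<Rightarrow> real" where
  "aL s k = (if even k then (-s/2)^(k div 2) / fact (k div 2) else 0)"

lemma lim_aR:
  assumes "0 < s"
  shows "((\<lambda>N. aR s k N) \<longlongrightarrow> aL s k) sequentially"
proof (cases "even k")
  case False thus ?thesis by (simp add: aR_def aL_def)
next
  case True
  then obtain a where k: "k = 2 * a" by blast
  have ev: "eventually (\<lambda>N. (-1)^a * (real (nN s N choose a) / (2 * real N)^a) = aR s k N) sequentially"
    using eventually_gt_at_top[of 0]
  proof (rule eventually_mono)
    fix N :: nat assume N: "0 < N"
    have "tN N ^ k = (2 * real N)^a" unfolding k tN_def power_mult by simp
    thus "(-1)^a * (real (nN s N choose a) / (2 * real N)^a) = aR s k N"
      unfolding aR_def using k by simp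
  qed
  have "((\<lambda>N. (-1)^a * (real (nN s N choose a) / (2 * real N)^a)) \<longlongrightarrow> (-1)^a * ((s/2)^a / fact a)) sequentially"
    by (intro tendsto_intros lim_choose assms)
  moreover have "(-1)^a * ((s/2)^a / fact a) = aL s k"
    unfolding aL_def k by (simp add: power_minus')
  ultimately show ?thesis using ev by (metis (mono_tags) Lim_transform_eventually)
qed

lemma of_real_gchoose: "complex_of_real (a gchoose k) = (of_real a :: complex) gchoose k"
  by (simp add: gbinomial_prod_rev)

definition bR :: "nat \<Rightarrow> real \<Rightarrow> real \<Rightarrow> real \<Rightarrow> nat \<Rightarrow> nat \<Rightarrow> real" where
  "bR m s x y l N = (real_of_int (qN m s x y N) gchoose l) / tN N ^ l"

lemma pim: "(x::'a::field) powi (- int n) = 1 / x^n" by (simp add: power_int_minus divide_inverse)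
lemma t1: "(real N / 2) powr (- real (Suc j) / 2) = inverse ((t / 2) ^ Suc j) \<Longrightarrow> (real N / 2) powr (- real (Suc j) / 2) = 2 ^ Suc j / t ^ Suc j"
  by (simp add: power_divide)

lemma scale_eq:
  assumes "0 < N"
  shows "sqrt (2 * real N) * (real N / 2) powr (- real (Suc j) / 2) * 2 powi (- int (Suc j)) = 1 / tN N ^ j"
proof -
  define t where "t = tN N"
  have t: "0 < t" using assms by (simp add: tN_def t_def)
  have t2: "t ^ 2 = 2 * real N" by (simp add: tN_def t_def)
  have N2: "real N / 2 = (t / 2) powr 2"
    using t t2 by (simp add: powr_numeral power_divide)
  have "(real N / 2) powr (- real (Suc j) / 2) = (t / 2) powr (2 * (- real (Suc j) / 2))"
    unfolding N2 by (rule powr_powr)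
  also have "2 * (- real (Suc j) / 2) = - real (Suc j)" by simp
  also have "(t / 2) powr (- real (Suc j)) = inverse ((t / 2) ^ Suc j)"
    unfolding powr_minus using t by (subst powr_realpow) auto
  finally have e: "(real N / 2) powr (- real (Suc j) / 2) = 2 ^ Suc j / t ^ Suc j"
    by (rule t1)
  have e2: "(2::real) powi (- int (Suc j)) = 1 / 2 ^ Suc j"
    by (rule pim)
  have e3: "sqrt (2 * real N) = t" by (simp add: t_def tN_def)
  show ?thesis unfolding e e2 e3 using t by (simp add: field_simps t_def)
qed


lemma LHS_eventually:
  assumes s: "0 < s" and r: "1/2 < r"
  shows "eventually (\<lambda>N. complex_of_real (sqrt (2 * real N) * (real N / 2) powr (- real m / 2))
            * Sstar r m (- \<lfloor>real N * s\<rfloor>)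
                (\<lfloor>- 2 * real N * s - x * sqrt (2 * real N)\<rfloor>) (\<lfloor>- sqrt (2 * real N) * y\<rfloor>)
          = complex_of_real (if m = 0 then 0 else (\<Sum>k=0..m-1. aR s k N * bR m s x y (m - 1 - k) N))) sequentially"
  using eventually_conj[OF eventually_gt_at_top[of 0] E_eventually[OF s, of x y]]
proof (rule eventually_mono)
  fix N :: nat assume h: "0 < N \<and> ZN s x y N + int (nN s N) + 1 \<le> 0"
  define E where "E = nat (- (ZN s x y N + int (nN s N) + 1))"
  define n where "n = nN s N"
  have fl: "\<lfloor>real N * s\<rfloor> = int n" unfolding n_def nN_def using s by simp
  have ZE: "\<lfloor>- 2 * real N * s - x * sqrt (2 * real N)\<rfloor> - \<lfloor>- sqrt (2 * real N) * y\<rfloor> + int n + 1 = - int E"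
    using h unfolding E_def n_def ZN_def tN_def by simp
  have q: "int (E + m) - int n = qN m s x y N"
    using h unfolding E_def n_def qN_def by simp
  have S: "Sstar r m (- \<lfloor>real N * s\<rfloor>) (\<lfloor>- 2 * real N * s - x * sqrt (2 * real N)\<rfloor>) (\<lfloor>- sqrt (2 * real N) * y\<rfloor>)
     = (if m = 0 then 0 else 2 powi (- int m) * coefA n (qN m s x y N) (m - 1))"
    unfolding fl Sstar_eval[OF r ZE] q ..
  show "complex_of_real (sqrt (2 * real N) * (real N / 2) powr (- real m / 2))
            * Sstar r m (- \<lfloor>real N * s\<rfloor>)
                (\<lfloor>- 2 * real N * s - x * sqrt (2 * real N)\<rfloor>) (\<lfloor>- sqrt (2 * real N) * y\<rfloor>)
          = complex_of_real (if m = 0 then 0 else (\<Sum>k=0..m-1. aR s k N * bR m s x y (m - 1 - k) N))"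
  proof (cases m)
    case 0 thus ?thesis unfolding S by simp
  next
    case (Suc j)
    have t: "0 < tN N" using h by (simp add: tN_def)
    have cA: "coefA n (qN m s x y N) j = complex_of_real (\<Sum>k=0..j. (if even k then (-1)^(k div 2) * real (n choose (k div 2)) else 0)
                      * (real_of_int (qN m s x y N) gchoose (j - k)))"
    proof -
      have g1: "\<And>l. (of_int (qN m s x y N) gchoose l :: complex) = of_real (real_of_int (qN m s x y N) gchoose l)"
        using of_real_gchoose[of "real_of_int (qN m s x y N)"] by simp
      show ?thesis unfolding coefA_def g1 of_real_sum
        by (rule sum.cong[OF refl]) simp
    qed
    have sumeq: "(\<Sum>k=0..j. aR s k N * bR m s x y (j - k) N) =
       (\<Sum>k=0..j. (if even k then (-1)^(k div 2) * real (n choose (k div 2)) else 0)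
                      * (real_of_int (qN m s x y N) gchoose (j - k))) / tN N ^ j"
      unfolding sum_divide_distrib
    proof (rule sum.cong[OF refl])
      fix k assume "k \<in> {0..j}"
      hence "tN N ^ j = tN N ^ k * tN N ^ (j - k)" by (simp flip: power_add)
      thus "aR s k N * bR m s x y (j - k) N = (if even k then (-1)^(k div 2) * real (n choose (k div 2)) else 0)
                      * (real_of_int (qN m s x y N) gchoose (j - k)) / tN N ^ j"
        unfolding aR_def bR_def n_def using t by simp
    qed
    have sc: "sqrt (2 * real N) * (real N / 2) powr (- real m / 2) * 2 powi (- int m) = 1 / tN N ^ j"
      using scale_eq[of N j] h Suc by simp
    have "complex_of_real (sqrt (2 * real N) * (real N / 2) powr (- real m / 2)) * (2 powi (- int m) * coefA n (qN m s x y N) j)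
        = complex_of_real (sqrt (2 * real N) * (real N / 2) powr (- real m / 2) * 2 powi (- int m)
             * (\<Sum>k=0..j. (if even k then (-1)^(k div 2) * real (n choose (k div 2)) else 0)
                      * (real_of_int (qN m s x y N) gchoose (j - k))))"
      unfolding cA by simp
    also have "\<dots> = complex_of_real (\<Sum>k=0..j. aR s k N * bR m s x y (j - k) N)"
      unfolding sc sumeq by simp
    finally show ?thesis unfolding S using Suc by simp
  qed
qed

lemma LHS_lim:
  assumes s: "0 < s" and r: "1/2 < r"
  shows "((\<lambda>N. complex_of_real (sqrt (2 * real N) * (real N / 2) powr (- real m / 2))
            * Sstar r m (- \<lfloor>real N * s\<rfloor>)
                (\<lfloor>- 2 * real N * s - x * sqrt (2 * real N)\<rfloor>) (\<lfloor>- sqrt (2 * real N) * y\<rfloor>))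
          \<longlongrightarrow> complex_of_real (if m = 0 then 0 else (\<Sum>k=0..m-1. aL s k * ((x - y)^(m - 1 - k) / fact (m - 1 - k))))) sequentially"
proof -
  have "((\<lambda>N. complex_of_real (if m = 0 then 0 else (\<Sum>k=0..m-1. aR s k N * bR m s x y (m - 1 - k) N)))
     \<longlongrightarrow> complex_of_real (if m = 0 then 0 else (\<Sum>k=0..m-1. aL s k * ((x - y)^(m - 1 - k) / fact (m - 1 - k))))) sequentially"
  proof (cases "m = 0")
    case True thus ?thesis by simp
  next
    case False
    have "((\<lambda>N. (\<Sum>k=0..m-1. aR s k N * bR m s x y (m - 1 - k) N))
     \<longlongrightarrow> (\<Sum>k=0..m-1. aL s k * ((x - y)^(m - 1 - k) / fact (m - 1 - k)))) sequentially"
      by (intro tendsto_sum tendsto_mult lim_aR s) (unfold bR_def, rule lim_gchoose[OF s])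
    thus ?thesis using False by (intro tendsto_of_real) simp
  qed
  thus ?thesis using LHS_eventually[OF s r, of m x y]
    by (rule Lim_transform_eventually[OF _ eventually_mono]) simp
qed

definition Vval :: "nat \<Rightarrow> real \<Rightarrow> real \<Rightarrow> real \<Rightarrow> real" where
  "Vval m s x y = (if m = 0 then 0 else (\<Sum>k=0..m-1. aL s k * ((x - y)^(m - 1 - k) / fact (m - 1 - k))))"

lemma residue_K:
  "residue (Skernel (- int m) (-s) x y) 0 = complex_of_real (Vval m s x y)"
proof (cases m)
  case 0
  have "Skernel (- int m) (-s) x y holomorphic_on UNIV"
    unfolding Skernel_def 0 by (simp add: holomorphic_intros)
  hence "residue (Skernel (- int m) (-s) x y) 0 = 0"
    by (rule residue_holo[OF open_UNIV UNIV_I])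
  thus ?thesis using 0 by (simp add: Vval_def)
next
  case (Suc j)
  define a where "a = complex_of_real (-s) / 2"
  define b where "b = complex_of_real (x - y)"
  define f where "f z = exp (a * z^2) * exp (b * z)" for z
  have Keq: "Skernel (- int m) (-s) x y = (\<lambda>z. f z / z ^ Suc j)"
  proof (rule ext)
    fix z
    have "Skernel (- int m) (-s) x y z = exp (a*z^2 + b*z) * (1 / z^Suc j)"
      unfolding Skernel_def a_def b_def Suc pim ..
    also have "\<dots> = f z / z ^ Suc j" by (simp add: f_def exp_add)
    finally show "Skernel (- int m) (-s) x y z = f z / z ^ Suc j" .
  qed
  have "((\<lambda>z. exp (a * z)) \<circ> (\<lambda>z. z^2)) has_fps_expansion (fps_exp a oo fps_X^2)"
    by (intro has_fps_expansion_compose fps_expansion_intros) simp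
  hence "f has_fps_expansion (fps_exp a oo fps_X^2) * fps_exp b"
    unfolding f_def[abs_def] by (intro fps_expansion_intros) (simp add: o_def)
  hence "residue f' 0 = ((fps_exp a oo fps_X^2) * fps_exp b) $ j" if "f' = (\<lambda>z. f z / z ^ Suc j)" for f'
    using that residue_fps_expansion_over_power_at_0 by blast
  hence "residue (Skernel (- int m) (-s) x y) 0 = ((fps_exp a oo fps_X^2) * fps_exp b) $ j"
    using Keq by blast
  also have "\<dots> = complex_of_real (\<Sum>k=0..j. aL s k * ((x - y)^(j - k) / fact (j - k)))"
  proof -
    have a2: "a = complex_of_real (-s / 2)" by (simp add: a_def)
    show ?thesis unfolding fps_mult_nth of_real_sum
  proof (rule sum.cong[OF refl])
    fix k assume "k \<in> {0..j}"
    show "(fps_exp a oo fps_X\<^sup>2) $ k * fps_exp b $ (j - k) = complex_of_real (aL s k * ((x - y) ^ (j - k) / fact (j - k)))"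
      unfolding fps_nth_compose_X_power aL_def a2 b_def
      by (cases "even k") (simp_all add: of_real_mult of_real_divide of_real_power)
  qed
  qed
  finally show ?thesis by (simp add: Vval_def Suc)
qed

definition KC :: "real \<Rightarrow> real \<Rightarrow> real \<Rightarrow> real \<Rightarrow> real" where
  "KC s \<theta> d c = (s * d + \<bar>c\<bar> + 1)^2 / (2 * s * (cos \<theta>^2 - sin \<theta>^2)) + \<bar>c\<bar> * d"

lemma theta_facts:
  assumes "0 < \<theta>" "\<theta> < pi/4"
  shows "0 < cos \<theta>" "cos \<theta> \<le> 1" "0 < sin \<theta>" "0 < cos \<theta>^2 - sin \<theta>^2"
proof -
  show "0 < cos \<theta>" using assms by (intro cos_gt_zero) auto
  show "cos \<theta> \<le> 1" by simp
  show "0 < sin \<theta>" using assms by (intro sin_gt_zero) auto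
  have "0 < cos (2 * \<theta>)" using assms by (intro cos_gt_zero) auto
  thus "0 < cos \<theta>^2 - sin \<theta>^2" by (simp add: cos_double)
qed

lemma exponent_bound:
  fixes s d c v cth sth2 \<rho> \<iota>2 :: real
  assumes s: "0 < s" and d: "0 < d" and v: "0 \<le> v" and cth: "0 < cth" "cth \<le> 1"
    and ka: "0 < cth^2 - sth2"
    and rho: "\<rho> = d - v * cth" and io: "\<iota>2 \<le> v^2 * sth2"
  shows "- s / 2 * (\<rho>^2 - \<iota>2) + c * \<rho> \<le> (s * d + \<bar>c\<bar> + 1)^2 / (2 * s * (cth^2 - sth2)) + \<bar>c\<bar> * d - v"
proof -
  define \<kappa> where "\<kappa> = cth^2 - sth2"
  define \<beta> where "\<beta> = s * d + \<bar>c\<bar> + 1"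
  have k: "0 < \<kappa>" using ka by (simp add: \<kappa>_def)
  have "- s / 2 * (\<rho>^2 - \<iota>2) \<le> - s / 2 * (\<rho>^2 - v^2 * sth2)"
    using s io by (simp add: mult_left_mono)
  also have "\<rho>^2 - v^2 * sth2 = d^2 - 2 * d * v * cth + v^2 * \<kappa>"
    unfolding rho \<kappa>_def by (simp add: power2_eq_square algebra_simps)
  finally have A: "- s / 2 * (\<rho>^2 - \<iota>2) \<le> - s/2 * d^2 + s * d * v * cth - s * \<kappa>/2 * v^2"
    by (simp add: algebra_simps)
  have vc: "v * cth \<le> v" using v cth by (simp add: mult_left_le)
  have B: "s * d * v * cth \<le> s * d * v" using mult_left_mono[OF vc, of "s * d"] s d by (simp add: mult.assoc)
  have C: "c * \<rho> \<le> \<bar>c\<bar> * (d + v)"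
  proof -
    have "c * \<rho> \<le> \<bar>c\<bar> * \<bar>\<rho>\<bar>" by (metis abs_ge_self abs_mult)
    also have "\<bar>\<rho>\<bar> \<le> d + v" proof -
      have vc0: "0 \<le> v * cth" using v cth by simp
      show ?thesis unfolding rho abs_le_iff using d v vc vc0 by linarith
    qed
    finally show ?thesis by (simp add: mult_left_mono)
  qed
  have D: "0 \<le> s/2 * d^2" using s by simp
  have E: "0 \<le> (s * \<kappa> * v - \<beta>)^2 / (2 * s * \<kappa>)" using s k by simp
  have F: "(s * \<kappa> * v - \<beta>)^2 / (2 * s * \<kappa>) = s * \<kappa>/2 * v^2 - \<beta> * v + \<beta>^2/(2 * s * \<kappa>)"
    using s k by (simp add: field_simps power2_eq_square)
  have "- s / 2 * (\<rho>^2 - \<iota>2) + c * \<rho> \<le> s * d * v - s * \<kappa>/2 * v^2 + \<bar>c\<bar> * (d + v)"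
    using A B C D by linarith
  also have "\<dots> \<le> \<beta>^2/(2 * s * \<kappa>) + \<bar>c\<bar> * d - v"
    using E F unfolding \<beta>_def by (simp add: algebra_simps)
  finally show ?thesis unfolding \<beta>_def \<kappa>_def .
qed

lemma Kbound:
  assumes s: "0 < s" and th: "0 < \<theta>" "\<theta> < pi/4" and d: "0 < d" and v: "0 \<le> v"
    and re: "Re z = d - v * cos \<theta>" and im: "(Im z)^2 \<le> v^2 * sin \<theta>^2"
    and del: "0 < \<delta>" "\<delta> \<le> norm z"
  shows "norm (Skernel (- int m) (-s) x y z) \<le> exp (KC s \<theta> d (x - y)) * exp (-v) / \<delta>^m"
proof -
  note tf = theta_facts[OF th]
  have z0: "z \<noteq> 0" using del by auto
  have "Re (complex_of_real (-s) / 2 * z^2 + complex_of_real (x - y) * z) = - s / 2 * ((Re z)^2 - (Im z)^2) + (x - y) * Re z"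
    by (simp add: power2_eq_square)
  also have "\<dots> \<le> KC s \<theta> d (x - y) - v"
    unfolding KC_def by (rule exponent_bound[OF s d v tf(1,2) tf(4) re im])
  finally have ex: "norm (exp (complex_of_real (-s) / 2 * z^2 + complex_of_real (x - y) * z)) \<le> exp (KC s \<theta> d (x - y)) * exp (-v)"
    by (simp add: norm_exp_eq_Re flip: exp_add)
  have pw: "norm (z powi (- int m)) \<le> 1 / \<delta>^m"
  proof -
    have "norm (z powi (- int m)) = 1 / norm z ^ m" by (simp add: pim norm_divide norm_power)
    also have "\<dots> \<le> 1 / \<delta>^m" using del by (intro divide_left_mono power_mono) (use z0 in \<open>auto intro!: mult_pos_pos\<close>)
    finally show ?thesis .
  qed
  have "norm (Skernel (- int m) (-s) x y z) = norm (exp (complex_of_real (-s) / 2 * z^2 + complex_of_real (x - y) * z)) * norm (z powi (- int m))"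
    unfolding Skernel_def by (simp add: norm_mult)
  also have "\<dots> \<le> (exp (KC s \<theta> d (x - y)) * exp (-v)) * (1 / \<delta>^m)"
    by (intro mult_mono ex pw) auto
  finally show ?thesis by simp
qed

lemma linepath_ray:
  fixes K :: "complex \<Rightarrow> complex" and d0 \<omega> :: complex and R :: real
  assumes R: "0 < R" and cont: "continuous_on (closed_segment d0 (d0 - \<omega> * of_real R)) K"
  shows "(K has_contour_integral integral {0..R} (\<lambda>u. K (d0 - \<omega> * of_real u) * (- \<omega>)))
           (linepath d0 (d0 - \<omega> * of_real R))"
proof -
  define \<phi> where "\<phi> u = K (d0 - \<omega> * of_real u) * (- \<omega>)" for u :: real
  have img: "(\<lambda>u. d0 - \<omega> * of_real u) ` {0..R} \<subseteq> closed_segment d0 (d0 - \<omega> * of_real R)"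
  proof
    fix z assume "z \<in> (\<lambda>u. d0 - \<omega> * of_real u) ` {0..R}"
    then obtain u where u: "u \<in> {0..R}" "z = d0 - \<omega> * of_real u" by auto
    have "z = (1 - u/R) *\<^sub>R d0 + (u/R) *\<^sub>R (d0 - \<omega> * of_real R)"
      using R unfolding u(2) by (simp add: scaleR_conv_of_real field_simps)
    moreover have "0 \<le> u/R" "u/R \<le> 1" using u R by auto
    ultimately show "z \<in> closed_segment d0 (d0 - \<omega> * of_real R)"
      unfolding closed_segment_def by blast
  qed
  have "continuous_on {0..R} \<phi>"
    unfolding \<phi>_def
    by (intro continuous_intros continuous_on_compose2[OF cont] img)
  hence "(\<phi> has_integral integral {0..R} \<phi>) (cbox 0 R)"
    using integrable_continuous_real[of 0 R \<phi>] by (simp add: has_integral_integral)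
  from has_integral_affinity'[OF this R, of 0]
  have "((\<lambda>x. \<phi> (R * x)) has_integral (integral {0..R} \<phi> /\<^sub>R R)) {0..1}"
    using R by simp
  hence h1: "((\<lambda>x. \<phi> (R * x) * of_real R) has_integral (integral {0..R} \<phi> /\<^sub>R R * of_real R)) {0..1}"
    by (rule has_integral_mult_left)
  have e: "integral {0..R} \<phi> /\<^sub>R R * of_real R = integral {0..R} \<phi>"
    using R by (simp add: scaleR_conv_of_real field_simps)
  have "((\<lambda>x. \<phi> (R * x) * of_real R) has_integral (integral {0..R} \<phi>)) {0..1}"
    using h1 unfolding e .
  moreover have "(\<lambda>x. K (linepath d0 (d0 - \<omega> * of_real R) x) * (d0 - \<omega> * of_real R - d0)) = (\<lambda>x. \<phi> (R * x) * of_real R)"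
  proof (rule ext)
    fix x
    have lp: "linepath d0 (d0 - \<omega> * of_real R) x = d0 - \<omega> * of_real (R * x)"
      by (simp add: linepath_def scaleR_conv_of_real algebra_simps)
    show "K (linepath d0 (d0 - \<omega> * of_real R) x) * (d0 - \<omega> * of_real R - d0) = \<phi> (R * x) * of_real R"
      unfolding lp \<phi>_def by simp
  qed
  ultimately show ?thesis unfolding has_contour_integral_linepath \<phi>_def by simp
qed

lemma K_cont: "continuous_on (- {0}) (Skernel k t x y)"
  unfolding Skernel_def by (intro continuous_intros) auto

lemma K_cont': "0 \<notin> S \<Longrightarrow> continuous_on S (Skernel k t x y)"
  by (rule continuous_on_subset[OF K_cont]) auto

lemma ray_norm_bound:
  fixes \<omega> :: complex
  assumes th: "0 < \<theta>" "\<theta> < pi/4" and d: "0 < d" and u: "0 \<le> u"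
    and om: "Re \<omega> = cos \<theta>" "(Im \<omega>)^2 = sin \<theta>^2"
  shows "d * sin \<theta> \<le> norm (of_real d - \<omega> * of_real u)"
proof -
  note tf = theta_facts[OF th]
  define z where "z = of_real d - \<omega> * of_real u"
  have re: "Re z = d - u * cos \<theta>" unfolding z_def using om by simp
  have im: "(Im z)^2 = u^2 * sin \<theta>^2" unfolding z_def using om by (simp add: power_mult_distrib)
  have "(norm z)^2 = (Re z)^2 + (Im z)^2" by (simp add: cmod_power2)
  also have "\<dots> = (u - d * cos \<theta>)^2 + (d * sin \<theta>)^2"
    unfolding re im power_mult_distrib sin_squared_eq by (simp add: power2_eq_square algebra_simps)
  finally have "(d * sin \<theta>)^2 \<le> (norm z)^2" by simp
  thus ?thesis unfolding z_def[symmetric] by (rule power2_le_imp_le) simp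
qed


lemma ray_limit:
  fixes \<omega> :: complex
  assumes s: "0 < s" and th: "0 < \<theta>" "\<theta> < pi/4" and d: "0 < d"
    and om: "Re \<omega> = cos \<theta>" "(Im \<omega>)^2 = sin \<theta>^2" "norm \<omega> = 1"
  shows "(\<lambda>u::real. Skernel (- int m) (-s) x y (of_real d - \<omega> * of_real u) * (- \<omega>)) integrable_on {0..}"
        "(\<lambda>k::nat. integral {0..real k} (\<lambda>u::real. Skernel (- int m) (-s) x y (of_real d - \<omega> * of_real u) * (- \<omega>)))
            \<longlonglongrightarrow> integral {0..} (\<lambda>u::real. Skernel (- int m) (-s) x y (of_real d - \<omega> * of_real u) * (- \<omega>))"
proof -
  note tf = theta_facts[OF th]
  define \<phi> where "\<phi> = (\<lambda>u::real. Skernel (- int m) (-s) x y (of_real d - \<omega> * of_real u) * (- \<omega>))"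
  define \<delta> where "\<delta> = d * sin \<theta>"
  have \<delta>: "0 < \<delta>" unfolding \<delta>_def using d tf by simp
  define M where "M = exp (KC s \<theta> d (x - y)) / \<delta>^m"
  have nz: "\<delta> \<le> norm (of_real d - \<omega> * of_real u)" if "0 \<le> u" for u
    unfolding \<delta>_def by (rule ray_norm_bound[OF th d that om(1,2)])
  have bound: "norm (\<phi> u) \<le> M * exp (-u)" if u: "0 \<le> u" for u
  proof -
    have "norm (\<phi> u) = norm (Skernel (- int m) (-s) x y (of_real d - \<omega> * of_real u))"
      unfolding \<phi>_def using om(3) by (simp add: norm_mult)
    also have "\<dots> \<le> exp (KC s \<theta> d (x - y)) * exp (-u) / \<delta>^m"
      by (rule Kbound[OF s th d u _ _ \<delta> nz[OF u]]) (use om in \<open>simp_all add: power_mult_distrib\<close>)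
    finally show ?thesis by (simp add: M_def)
  qed
  have cont: "continuous_on {0..} \<phi>"
    unfolding \<phi>_def
  proof (intro continuous_intros continuous_on_compose2[OF K_cont])
    show "(\<lambda>u. of_real d - \<omega> * of_real u) ` {0..} \<subseteq> - {0}"
      using nz \<delta> by force
  qed
  define f where "f k u = (if u \<in> {0..real k} then \<phi> u else 0)" for k :: nat and u :: real
  have fint: "f k integrable_on {0..}" for k
  proof -
    have "\<phi> integrable_on {0..real k}"
      by (rule integrable_continuous_real, rule continuous_on_subset[OF cont]) auto
    hence "\<phi> integrable_on ({0..real k} \<inter> {0..})" by (simp add: Int_absorb2)
    thus ?thesis unfolding f_def by (subst integrable_restrict_Int)
  qed
  have fintegral: "integral {0..} (f k) = integral {0..real k} \<phi>" for k
    unfolding f_def integral_restrict_Int by (simp add: Int_absorb2)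
  have hint: "(\<lambda>u. M * exp (-u)) integrable_on {0..}"
    using integrable_cmul[OF integrable_on_exp_minus_to_infinity[of 1 0], of M] by simp
  have le: "norm (f k u) \<le> M * exp (-u)" if "u \<in> {0..}" for k u
    using bound[of u] that unfolding f_def using \<delta> by (auto simp: M_def)
  have conv: "(\<lambda>k. f k u) \<longlonglongrightarrow> \<phi> u" if "u \<in> {0..}" for u
  proof -
    obtain n :: nat where n: "u \<le> real n" using real_arch_simple by blast
    have "eventually (\<lambda>k. f k u = \<phi> u) sequentially"
      using eventually_ge_at_top[of n] by eventually_elim (use that n in \<open>auto simp: f_def\<close>)
    thus ?thesis by (rule tendsto_eventually)
  qed
  note dc = dominated_convergence[OF fint hint le conv]
  show "\<phi> integrable_on {0..}" using dc(1) unfolding \<phi>_def .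
  show "(\<lambda>k. integral {0..real k} \<phi>) \<longlonglongrightarrow> integral {0..} \<phi>" using dc(2) unfolding fintegral .
qed

lemma tri_interior:
  assumes th: "0 < \<theta>" "\<theta> < pi/4" and d: "0 < d" and R: "d < R * cos \<theta>"
  defines "A \<equiv> complex_of_real d - cis \<theta> * of_real R"
      and "B \<equiv> complex_of_real d - cis (-\<theta>) * of_real R"
  shows "0 \<in> interior (convex hull {A, complex_of_real d, B})"
proof -
  note tf = theta_facts[OF th]
  define d' where "d' = complex_of_real d"
  have R0: "0 < R" using R d tf by (smt (verit) mult_nonpos_nonneg)
  have Ad: "A \<noteq> d'" unfolding A_def d'_def using R0 by simp
  have Bd: "d' \<noteq> B" unfolding B_def d'_def using R0 by simp
  have AB: "A \<noteq> B"
  proof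
    assume "A = B"
    hence "Im A = Im B" by simp
    thus False unfolding A_def B_def using R0 tf by simp
  qed
  have s2: "sin (2 * \<theta>) \<noteq> 0"
  proof -
    have "0 < sin (2 * \<theta>)" using th by (intro sin_gt_zero) auto
    thus ?thesis by simp
  qed
  have ncol: "\<not> collinear {A, d', B}"
  proof
    assume "collinear {A, d', B}"
    hence "collinear {0, A - d', B - d'}"
      by (subst (asm) collinear_3) (auto simp: A_def)
    hence "(B - d') / (A - d') \<in> \<real>" by (simp add: collinear_iff_Reals)
    moreover have "(B - d') / (A - d') = cis (- 2 * \<theta>)"
      unfolding A_def B_def d'_def using R0 by (simp add: cis_divide)
    ultimately have "Im (cis (- 2 * \<theta>)) = 0" by (simp add: complex_is_Real_iff)
    thus False using s2 by simp
  qed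
  hence nad: "\<not> affine_dependent {A, d', B}"
    using collinear_3_eq_affine_dependent by blast
  have card: "card {A, d', B} = 3" using Ad Bd AB by simp
  define lam where "lam = d / (2 * R * cos \<theta>)"
  have l0: "0 < lam" unfolding lam_def using d R0 tf by simp
  have l1: "lam < 1/2" unfolding lam_def using d R0 tf R by (simp add: field_simps)
  define w where "w z = (if z = d' then 1 - 2 * lam else lam)" for z
  have "\<forall>z\<in>{A, d', B}. 0 < w z \<and> w z < 1" unfolding w_def using l0 l1 by auto
  moreover have "sum w {A, d', B} = 1" using Ad Bd AB by (simp add: w_def)
  moreover have "(\<Sum>z\<in>{A, d', B}. w z *\<^sub>R z) = 0"
  proof -
    have "(\<Sum>z\<in>{A, d', B}. w z *\<^sub>R z) = lam *\<^sub>R A + (1 - 2 * lam) *\<^sub>R d' + lam *\<^sub>R B"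
      using Ad Bd AB by (simp add: w_def)
    also have "\<dots> = 0"
    proof (rule complex_eqI)
      have "lam * (R * cos \<theta>) = d / 2" unfolding lam_def using R0 tf by (simp add: field_simps)
      thus "Re (lam *\<^sub>R A + (1 - 2 * lam) *\<^sub>R d' + lam *\<^sub>R B) = Re 0"
        unfolding A_def B_def d'_def by (simp add: algebra_simps)
      show "Im (lam *\<^sub>R A + (1 - 2 * lam) *\<^sub>R d' + lam *\<^sub>R B) = Im 0"
        unfolding A_def B_def d'_def by (simp add: algebra_simps)
    qed
    finally show ?thesis .
  qed
  ultimately have "0 \<in> {y. \<exists>u. (\<forall>x\<in>{A, d', B}. 0 < u x \<and> u x < 1) \<and> sum u {A, d', B} = 1 \<and> (\<Sum>x\<in>{A, d', B}. u x *\<^sub>R x) = y}"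
    by blast
  thus ?thesis using interior_convex_hull_explicit[OF nad] card unfolding d'_def by simp
qed


lemma K_holo: "Skernel k t x y holomorphic_on (UNIV - {0})"
  unfolding Skernel_def by (intro holomorphic_intros) auto

lemma tri_integral:
  assumes th: "0 < \<theta>" "\<theta> < pi/4" and d: "0 < d" and R: "d < R * cos \<theta>"
  defines "A \<equiv> complex_of_real d - cis \<theta> * of_real R"
      and "B \<equiv> complex_of_real d - cis (-\<theta>) * of_real R"
  shows "contour_integral (linepath A (of_real d) +++ linepath (of_real d) B +++ linepath B A) (Skernel k t x y)
           = 2 * pi * \<i> * residue (Skernel k t x y) 0"
proof -
  note tf = theta_facts[OF th]
  have R0: "0 < R" using R d tf by (smt (verit) mult_nonpos_nonneg)
  define \<gamma> where "\<gamma> = linepath A (of_real d) +++ linepath (of_real d) B +++ linepath B A"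
  have int: "0 \<in> interior (convex hull {A, complex_of_real d, B})"
    unfolding A_def B_def by (rule tri_interior[OF th d R])
  have nseg: "0 \<notin> closed_segment A (of_real d) \<union> closed_segment (of_real d) B \<union> closed_segment B A"
    using int interior_of_triangle[of A "complex_of_real d" B] by simp
  have vp: "valid_path \<gamma>" unfolding \<gamma>_def
    by (intro valid_path_join valid_path_linepath) auto
  have pi: "path_image \<gamma> \<subseteq> UNIV - {0}"
    using nseg unfolding \<gamma>_def by (auto simp: path_image_join)
  have ci: "contour_integral \<gamma> (Skernel k t x y) = 2 * pi * \<i> * (\<Sum>p\<in>{0}. winding_number \<gamma> p * residue (Skernel k t x y) p)"
    by (rule Residue_theorem[OF open_UNIV connected_UNIV _ K_holo vp _ pi]) (auto simp: \<gamma>_def)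
  have wn: "winding_number \<gamma> 0 = 1"
  proof -
    have "winding_number \<gamma> 0 = (if 0 < Im ((complex_of_real d - A) * cnj (complex_of_real d - 0)) then 1 else -1)"
      unfolding \<gamma>_def by (rule winding_number_triangle[OF int])
    moreover have "0 < Im ((complex_of_real d - A) * cnj (complex_of_real d - 0))"
      unfolding A_def using R0 d tf by simp
    ultimately show ?thesis by simp
  qed
  show ?thesis using ci wn unfolding \<gamma>_def by simp
qed

lemma has_integral_reflect_set:
  fixes h :: "real \<Rightarrow> 'a::banach"
  assumes "(h has_integral I) S"
  shows "((\<lambda>x. h (-x)) has_integral I) (uminus ` S)"
proof -
  define H where "H y = (if y \<in> S then h y else 0)" for y
  have eqf: "(\<lambda>x. if x \<in> uminus ` S then h (-x) else 0) = (\<lambda>x. H (-x))"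
    by (rule ext) (auto simp: H_def image_iff)
  from assms[unfolded has_integral_alt'] have
    i1: "\<And>a b. H integrable_on cbox a b" and
    i2: "\<And>e. e > 0 \<Longrightarrow> \<exists>B>0. \<forall>a b. ball 0 B \<subseteq> cbox a b \<longrightarrow> norm (integral (cbox a b) H - I) < e"
    unfolding H_def by blast+
  have r1: "(\<lambda>x. H (-x)) integrable_on cbox a b" for a b :: real
    using integrable_reflect[of H "-a" "-b"] i1[of "-b" "-a"] by simp
  have r2: "integral (cbox a b) (\<lambda>x. H (-x)) = integral (cbox (-b) (-a)) H" for a b :: real
    using integral_reflect[of "-a" "-b" H] by simp
  have bs: "ball 0 B \<subseteq> cbox (-b) (-a)" if "ball 0 B \<subseteq> cbox a b" for a b B :: real
  proof
    fix x :: real assume "x \<in> ball 0 B"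
    hence "-x \<in> ball 0 B" by simp
    hence "-x \<in> cbox a b" using that by blast
    thus "x \<in> cbox (-b) (-a)" by auto
  qed
  show ?thesis
    unfolding has_integral_alt' eqf
  proof (intro conjI allI impI)
    fix a b show "(\<lambda>x. H (-x)) integrable_on cbox a b" by (rule r1)
  next
    fix e :: real assume "e > 0"
    then obtain B where B: "B > 0" "\<forall>a b. ball 0 B \<subseteq> cbox a b \<longrightarrow> norm (integral (cbox a b) H - I) < e"
      using i2 by blast
    show "\<exists>B>0. \<forall>a b. ball 0 B \<subseteq> cbox a b \<longrightarrow> norm (integral (cbox a b) (\<lambda>x. H (-x)) - I) < e"
      using B bs r2 by metis
  qed
qed


lemma tri_nseg:
  assumes th: "0 < \<theta>" "\<theta> < pi/4" and d: "0 < d" and R: "d < R * cos \<theta>"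
  shows "0 \<notin> closed_segment (complex_of_real d - cis \<theta> * of_real R) (of_real d)"
        "0 \<notin> closed_segment (of_real d) (complex_of_real d - cis (-\<theta>) * of_real R)"
        "0 \<notin> closed_segment (complex_of_real d - cis (-\<theta>) * of_real R) (complex_of_real d - cis \<theta> * of_real R)"
  using tri_interior[OF th d R]
        interior_of_triangle[of "complex_of_real d - cis \<theta> * of_real R" "complex_of_real d" "complex_of_real d - cis (-\<theta>) * of_real R"]
  by auto

lemma vert_bound:
  assumes s: "0 < s" and th: "0 < \<theta>" "\<theta> < pi/4" and d: "0 < d" and R: "d + 1 \<le> R * cos \<theta>"
    and z: "z \<in> closed_segment (complex_of_real d - cis (-\<theta>) * of_real R) (complex_of_real d - cis \<theta> * of_real R)"
  shows "norm (Skernel (- int m) (-s) x y z) \<le> exp (KC s \<theta> d (x - y)) * exp (-R)"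
proof -
  note tf = theta_facts[OF th]
  have R0: "0 \<le> R" using R d tf by (smt (verit) mult_nonpos_nonneg)
  obtain t where t: "0 \<le> t" "t \<le> 1"
    and zt: "z = (1 - t) *\<^sub>R (complex_of_real d - cis (-\<theta>) * of_real R) + t *\<^sub>R (complex_of_real d - cis \<theta> * of_real R)"
    using z unfolding closed_segment_def by blast
  have re: "Re z = d - R * cos \<theta>" unfolding zt by (simp add: algebra_simps)
  have im: "Im z = R * sin \<theta> * (1 - 2 * t)" unfolding zt by (simp add: algebra_simps)
  have "(1 - 2 * t)^2 \<le> 1" using t by (subst abs_square_le_1) (simp add: abs_le_iff)
  hence "(R * sin \<theta>)^2 * (1 - 2 * t)^2 \<le> (R * sin \<theta>)^2 * 1" by (intro mult_left_mono) auto
  hence im2: "(Im z)^2 \<le> R^2 * sin \<theta>^2" unfolding im by (simp add: power_mult_distrib)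
  have "1 \<le> \<bar>Re z\<bar>" unfolding re using R by simp
  hence nz: "1 \<le> norm z" using abs_Re_le_cmod[of z] by linarith
  have "norm (Skernel (- int m) (-s) x y z) \<le> exp (KC s \<theta> d (x - y)) * exp (-R) / 1^m"
    by (rule Kbound[OF s th d R0 re im2 _ nz]) simp
  thus ?thesis by simp
qed


lemma Scont_eval:
  assumes s: "0 < s" and th: "0 < \<theta>" "\<theta> < pi/4" and d: "0 < d"
  shows "Scont \<theta> d (- int m) (-s) x y = complex_of_real (Vval m s x y)"
proof -
  note tf = theta_facts[OF th]
  define K where "K = Skernel (- int m) (-s) x y"
  define d' where "d' = complex_of_real d"
  define \<phi>p where "\<phi>p = (\<lambda>u::real. K (d' - cis \<theta> * of_real u) * (- cis \<theta>))"
  define \<phi>m where "\<phi>m = (\<lambda>u::real. K (d' - cis (-\<theta>) * of_real u) * (- cis (-\<theta>)))"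
  define V where "V = complex_of_real (Vval m s x y)"
  have RLp: "\<phi>p integrable_on {0..}" "(\<lambda>k::nat. integral {0..real k} \<phi>p) \<longlonglongrightarrow> integral {0..} \<phi>p"
    using ray_limit[OF s th d, of "cis \<theta>"] unfolding \<phi>p_def K_def d'_def by simp_all
  have RLm: "\<phi>m integrable_on {0..}" "(\<lambda>k::nat. integral {0..real k} \<phi>m) \<longlonglongrightarrow> integral {0..} \<phi>m"
    using ray_limit[OF s th d, of "cis (-\<theta>)"] unfolding \<phi>m_def K_def d'_def by simp_all
  have left: "integral {..0} (\<lambda>u. K (d' + cis \<theta> * of_real u) * cis \<theta>) = - integral {0..} \<phi>p"
  proof -
    have "(\<phi>p has_integral integral {0..} \<phi>p) {0..}" using RLp(1) by (rule integrable_integral)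
    from has_integral_reflect_set[OF this]
    have "((\<lambda>u. \<phi>p (-u)) has_integral integral {0..} \<phi>p) {..0}"
      by (simp add: image_uminus_atLeast)
    moreover have "(\<lambda>u. \<phi>p (-u)) = (\<lambda>u. - (K (d' + cis \<theta> * of_real u) * cis \<theta>))"
      unfolding \<phi>p_def by (rule ext) simp
    ultimately have "((\<lambda>u. K (d' + cis \<theta> * of_real u) * cis \<theta>) has_integral - integral {0..} \<phi>p) {..0}"
      by (simp add: has_integral_neg_iff)
    thus ?thesis by (rule integral_unique)
  qed
  have Sc: "Scont \<theta> d (- int m) (-s) x y = (- integral {0..} \<phi>p + integral {0..} \<phi>m) / (2 * of_real pi * \<i>)"
    unfolding Scont_def left[unfolded K_def d'_def] \<phi>m_def K_def d'_def ..
  obtain N0 :: nat where N0: "(d + 1) / cos \<theta> \<le> real N0" using real_arch_simple by blast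
  define C3 where "C3 k = contour_integral (linepath (d' - cis (-\<theta>) * of_real (real k)) (d' - cis \<theta> * of_real (real k))) K" for k :: nat
  have key: "- integral {0..real k} \<phi>p + integral {0..real k} \<phi>m = 2 * pi * \<i> * V - C3 k"
       and C3b: "norm (C3 k) \<le> exp (KC s \<theta> d (x - y)) * exp (- real k) * (2 * real k)"
    if k: "N0 \<le> k" for k
  proof -
    define R where "R = real k"
    have kk: "real N0 * cos \<theta> \<le> real k * cos \<theta>" using k tf by (intro mult_right_mono) auto
    have n0: "d + 1 \<le> real N0 * cos \<theta>" using N0 tf by (simp add: field_simps)
    have R1: "d + 1 \<le> R * cos \<theta>" using n0 kk unfolding R_def by linarith
    have R: "d < R * cos \<theta>" using R1 by simp
    have R0: "0 < R" using R d tf by (smt (verit) mult_nonpos_nonneg)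
    define A where "A = d' - cis \<theta> * of_real R"
    define B where "B = d' - cis (-\<theta>) * of_real R"
    note ns = tri_nseg[OF th d R, folded d'_def, folded A_def B_def]
    have cA: "continuous_on (closed_segment d' A) K"
      unfolding K_def by (rule K_cont') (use ns(1) closed_segment_commute in metis)
    have cB: "continuous_on (closed_segment d' B) K"
      unfolding K_def by (rule K_cont') (use ns(2) in metis)
    have cBA: "continuous_on (closed_segment B A) K"
      unfolding K_def by (rule K_cont') (use ns(3) in metis)
    have cAd: "continuous_on (closed_segment A d') K"
      using cA closed_segment_commute by metis
    have hA: "(K has_contour_integral integral {0..R} \<phi>p) (linepath d' A)"
      unfolding \<phi>p_def A_def by (rule linepath_ray[OF R0]) (use cA in \<open>simp add: A_def\<close>)
    have hB: "(K has_contour_integral integral {0..R} \<phi>m) (linepath d' B)"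
      unfolding \<phi>m_def B_def by (rule linepath_ray[OF R0]) (use cB in \<open>simp add: B_def\<close>)
    have ciA: "contour_integral (linepath A d') K = - integral {0..R} \<phi>p"
    proof -
      have "contour_integral (linepath A d') K = contour_integral (reversepath (linepath d' A)) K" by simp
      also have "\<dots> = - contour_integral (linepath d' A) K" by (rule contour_integral_reversepath) simp
      also have "contour_integral (linepath d' A) K = integral {0..R} \<phi>p" using hA by (rule contour_integral_unique)
      finally show ?thesis .
    qed
    have ciB: "contour_integral (linepath d' B) K = integral {0..R} \<phi>m" using hB by (rule contour_integral_unique)
    have tri: "contour_integral (linepath A d' +++ linepath d' B +++ linepath B A) K = 2 * pi * \<i> * V"
      using tri_integral[OF th d R, of "- int m" "-s" x y] residue_K[of m s x y]
      unfolding K_def V_def A_def B_def d'_def by simp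
    have i1: "K contour_integrable_on linepath A d'" by (rule contour_integrable_continuous_linepath[OF cAd])
    have i2: "K contour_integrable_on linepath d' B" by (rule contour_integrable_continuous_linepath[OF cB])
    have i3: "K contour_integrable_on linepath B A" by (rule contour_integrable_continuous_linepath[OF cBA])
    have js: "contour_integral (linepath A d' +++ linepath d' B +++ linepath B A) K
          = contour_integral (linepath A d') K + (contour_integral (linepath d' B) K + contour_integral (linepath B A) K)"
      using i1 i2 i3 by (simp add: contour_integrable_joinI)
    have c3e: "C3 k = contour_integral (linepath B A) K" unfolding C3_def A_def B_def R_def ..
    have "2 * pi * \<i> * V = - integral {0..R} \<phi>p + (integral {0..R} \<phi>m + C3 k)"
      using js unfolding tri ciA ciB c3e .
    thus "- integral {0..real k} \<phi>p + integral {0..real k} \<phi>m = 2 * pi * \<i> * V - C3 k"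
      unfolding R_def by (simp add: algebra_simps)
    have "norm (C3 k) \<le> exp (KC s \<theta> d (x - y)) * exp (- R) * norm (A - B)"
    proof (rule has_contour_integral_bound_linepath)
      show "(K has_contour_integral C3 k) (linepath B A)"
        unfolding C3_def A_def B_def R_def using i3[unfolded A_def B_def R_def] by (rule has_contour_integral_integral)
      show "0 \<le> exp (KC s \<theta> d (x - y)) * exp (- R)" by simp
      fix z assume "z \<in> closed_segment B A"
      thus "norm (K z) \<le> exp (KC s \<theta> d (x - y)) * exp (- R)"
        unfolding K_def by (intro vert_bound[OF s th d R1]) (simp add: A_def B_def d'_def)
    qed
    also have "norm (A - B) \<le> 2 * R"
    proof -
      have "norm (A - B) = norm (cis (-\<theta>) * of_real R - cis \<theta> * of_real R)" by (simp add: A_def B_def)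
      also have "\<dots> \<le> norm (cis (-\<theta>) * of_real R) + norm (cis \<theta> * of_real R)" by (rule norm_triangle_ineq4)
      also have "\<dots> = 2 * R" using R0 by (simp add: norm_mult)
      finally show ?thesis .
    qed
    hence "exp (KC s \<theta> d (x - y)) * exp (- R) * norm (A - B) \<le> exp (KC s \<theta> d (x - y)) * exp (- R) * (2 * R)"
      by (intro mult_left_mono) auto
    finally show "norm (C3 k) \<le> exp (KC s \<theta> d (x - y)) * exp (- real k) * (2 * real k)" unfolding R_def .
  qed
  have C3lim: "C3 \<longlonglongrightarrow> 0"
  proof (rule Lim_null_comparison)
    show "eventually (\<lambda>k. norm (C3 k) \<le> exp (KC s \<theta> d (x - y)) * exp (- real k) * (2 * real k)) sequentially"
      using eventually_ge_at_top[of N0] by eventually_elim (rule C3b)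
    show "(\<lambda>k. exp (KC s \<theta> d (x - y)) * exp (- real k) * (2 * real k)) \<longlonglongrightarrow> 0"
      by real_asymp
  qed
  have lim1: "(\<lambda>k::nat. - integral {0..real k} \<phi>p + integral {0..real k} \<phi>m) \<longlonglongrightarrow> - integral {0..} \<phi>p + integral {0..} \<phi>m"
    by (intro tendsto_intros RLp(2) RLm(2))
  have "(\<lambda>k::nat. 2 * pi * \<i> * V - C3 k) \<longlonglongrightarrow> 2 * pi * \<i> * V - 0"
    by (intro tendsto_intros C3lim)
  hence l2: "(\<lambda>k::nat. 2 * pi * \<i> * V - C3 k) \<longlonglongrightarrow> 2 * pi * \<i> * V" by simp
  have ev: "eventually (\<lambda>k. 2 * pi * \<i> * V - C3 k = - integral {0..real k} \<phi>p + integral {0..real k} \<phi>m) sequentially"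
    using eventually_ge_at_top[of N0] by eventually_elim (metis key)
  have lim2: "(\<lambda>k::nat. - integral {0..real k} \<phi>p + integral {0..real k} \<phi>m) \<longlonglongrightarrow> 2 * pi * \<i> * V"
    by (rule Lim_transform_eventually[OF l2 ev])
  have "- integral {0..} \<phi>p + integral {0..} \<phi>m = 2 * pi * \<i> * V"
    using LIMSEQ_unique[OF lim1 lim2] .
  thus ?thesis unfolding Sc V_def by (simp add: field_simps)
qed

theorem lemma2:
  fixes m :: nat and s x y r \<theta> d :: real
  assumes "0 < s" "s \<le> 1" "1/2 < r" "r < 1" "0 < \<theta>" "\<theta> < pi/4" "0 < d"
  shows "((\<lambda>N::nat. complex_of_real (sqrt (2 * real N) * (real N / 2) powr (- real m / 2))
            * Sstar r m (- \<lfloor>real N * s\<rfloor>)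
                (\<lfloor>- 2 * real N * s - x * sqrt (2 * real N)\<rfloor>) (\<lfloor>- sqrt (2 * real N) * y\<rfloor>))
          \<longlongrightarrow> Scont \<theta> d (- int m) (- s) x y) sequentially"
proof -
  have "Scont \<theta> d (- int m) (- s) x y = complex_of_real (Vval m s x y)"
    using assms by (intro Scont_eval) auto
  thus ?thesis using LHS_lim[of s r m x y] assms by (simp add: Vval_def)
qed

end
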